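(* For $a\in\mathbb R\setminus\{0,1\}$, let $\mathfrak g_a$ be the $7$-dimensional nilpotent Lie algebra with basis $\{e_1,\dots,e_7\}$ and dual basis $\{e^i\}$ satisfying $$de^1=de^2=de^3=0,\ de^4=(a-1)e^{12},\ de^5=ae^{13},\ de^6=e^{23},\ de^7=e^{16}+e^{25}+e^{34}.$$ Then the set $\mathbf S$ of signatures of diagonal metrics satisfying $\operatorname{Ric}=-\frac12\mathrm{id}+\frac12N$ is: for $a<0$: $\{\emptyset,12357,12367,1237,126,125,1256,134,13456,1346,14567,1457,147,234,2345,23456,24567,2467,247,3567,357,367,5,6\}$; for $0<a<1$: $\{\emptyset,12347,1237,12357,12456,1256,126,13456,1346,136,1457,147,157,234,2345,235,24567,2467,267,34567,3567,367,4,5\}$; for $a>1$: $\{\emptyset,12347,12367,1237,12456,125,1256,134,1346,136,14567,1457,157,2345,23456,235,2467,247,267,34567,3567,357,4,6\}$.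
   Context: $d$ is the Chevalley–Eilenberg differential and $e^{ij}=e^i\wedge e^j$; the basis $\{e_i\}$ is a nice basis. The root matrix $M_\Delta$ has one row for each triple $(\{i,j\},k)$ with $[e_i,e_j]$ a nonzero multiple of $e_k$, with $+1$ in position $k$, $-1$ in positions $i,j$, $0$ elsewhere. $N$ is the diagonal Nikolayevsky derivation: the diagonal matrix with diagonal $M_\Delta^Tb+[1]$, where $b$ solves $M_\Delta M_\Delta^Tb=[1]$, $[1]$ the all-ones vector. A diagonal metric is $\sum_ig_ie^i\otimes e^i$, $g_i\neq0$, with Ricci operator $\operatorname{Ric}$. A signature is recorded as the string of indices $i$ with $g_i<0$; $\emptyset$ denotes positive definite. *)

theory Defs
  imports Complex_Main
begin

(* Lie algebra on R^n with basis e_1..e_n given by structure constants: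
   [e_i, e_j] = sum_k c i j k * e_k.
   Metric: diagonal, g(e_i,e_i) = g i. *)

(* Levi-Civita connection via Koszul:  nabla_{e_i} e_j = sum_k lc c g i j k * e_k *)
definition lc :: "(nat \<Rightarrow> nat \<Rightarrow> nat \<Rightarrow> real) \<Rightarrow> (nat \<Rightarrow> real) \<Rightarrow> nat \<Rightarrow> nat \<Rightarrow> nat \<Rightarrow> real" where
  "lc c g i j k = (c i j k * g k - c j k i * g i + c k i j * g j) / (2 * g k)"

(* R(e_i,e_j) e_l = nabla_i nabla_j e_l - nabla_j nabla_i e_l - nabla_[e_i,e_j] e_l; component m *)
definition curv :: "nat \<Rightarrow> (nat \<Rightarrow> nat \<Rightarrow> nat \<Rightarrow> real) \<Rightarrow> (nat \<Rightarrow> real) \<Rightarrow> nat \<Rightarrow> nat \<Rightarrow> nat \<Rightarrow> nat \<Rightarrow> real" where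
  "curv n c g i j l m =
     (\<Sum>k=1..n. lc c g j l k * lc c g i k m - lc c g i l k * lc c g j k m)
     - (\<Sum>k=1..n. c i j k * lc c g k l m)"

definition ric_form :: "nat \<Rightarrow> (nat \<Rightarrow> nat \<Rightarrow> nat \<Rightarrow> real) \<Rightarrow> (nat \<Rightarrow> real) \<Rightarrow> nat \<Rightarrow> nat \<Rightarrow> real" where
  "ric_form n c g j l = (\<Sum>i=1..n. curv n c g i j l i)"

(* Ricci operator: Ric(e_j) = sum_l ric_op n c g l j * e_l, with g(Ric X, Y) = ric(X,Y) *)
definition ric_op :: "nat \<Rightarrow> (nat \<Rightarrow> nat \<Rightarrow> nat \<Rightarrow> real) \<Rightarrow> (nat \<Rightarrow> real) \<Rightarrow> nat \<Rightarrow> nat \<Rightarrow> real" where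
  "ric_op n c g l j = ric_form n c g j l / g l"

(* index set of rows of the root matrix: triples ({i,j},k), encoded with i<j *)
definition roots :: "nat \<Rightarrow> (nat \<Rightarrow> nat \<Rightarrow> nat \<Rightarrow> real) \<Rightarrow> (nat \<times> nat \<times> nat) set" where
  "roots n c = {(i,j,k). i \<in> {1..n} \<and> j \<in> {1..n} \<and> k \<in> {1..n} \<and> i < j \<and> c i j k \<noteq> 0}"

definition rootrow :: "nat \<times> nat \<times> nat \<Rightarrow> nat \<Rightarrow> real" where
  "rootrow r m = (case r of (i,j,k) \<Rightarrow>
      (if m = k then 1 else 0) - (if m = i then 1 else 0) - (if m = j then 1 else 0))"

definition is_nik :: "nat \<Rightarrow> (nat \<Rightarrow> nat \<Rightarrow> nat \<Rightarrow> real) \<Rightarrow> (nat \<Rightarrow> real) \<Rightarrow> bool" where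
  "is_nik n c N \<longleftrightarrow> (\<exists>b :: nat \<times> nat \<times> nat \<Rightarrow> real.
      (\<forall>r\<in>roots n c. (\<Sum>m=1..n. rootrow r m * (\<Sum>r'\<in>roots n c. rootrow r' m * b r')) = 1)
    \<and> (\<forall>m\<in>{1..n}. N m = (\<Sum>r\<in>roots n c. rootrow r m * b r) + 1))"

definition nik :: "nat \<Rightarrow> (nat \<Rightarrow> nat \<Rightarrow> nat \<Rightarrow> real) \<Rightarrow> nat \<Rightarrow> real" where
  "nik n c = (SOME N. is_nik n c N)"

definition sigs :: "nat \<Rightarrow> (nat \<Rightarrow> nat \<Rightarrow> nat \<Rightarrow> real) \<Rightarrow> nat set set" where
  "sigs n c = {{i \<in> {1..n}. g i < 0} | g.
      (\<forall>i\<in>{1..n}. g i \<noteq> 0) \<and>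
      (\<forall>l\<in>{1..n}. \<forall>j\<in>{1..n}.
          ric_op n c g l j = (if l = j then - 1/2 + 1/2 * nik n c j else 0))}"

(* the Lie algebra g_a: de^k = sum_{i<j} dcoef a k i j e^{ij} *)
definition dcoef :: "real \<Rightarrow> nat \<Rightarrow> nat \<Rightarrow> nat \<Rightarrow> real" where
  "dcoef a k i j =
     (if (k,i,j) = (4,1,2) then a - 1
      else if (k,i,j) = (5,1,3) then a
      else if (k,i,j) = (6,2,3) then 1
      else if (k,i,j) = (7,1,6) then 1
      else if (k,i,j) = (7,2,5) then 1
      else if (k,i,j) = (7,3,4) then 1
      else 0)"

(* structure constants via de^k(X,Y) = - e^k([X,Y]) *)
definition ga :: "real \<Rightarrow> nat \<Rightarrow> nat \<Rightarrow> nat \<Rightarrow> real" where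
  "ga a i j k = (if i < j then - dcoef a k i j else if j < i then dcoef a k j i else 0)"

end

theory Submission
  imports Defs
begin


lemma sum7: "(\<Sum>i=1..7::nat. f i) = f 1 + f 2 + f 3 + f 4 + f 5 + f 6 + (f 7 :: real)"
  by (simp add: numeral_eq_Suc atLeastAtMostSuc_conv add.commute add.left_commute)

lemma in7: "(i::nat) \<in> {1..7} \<longleftrightarrow> i = 1 \<or> i = 2 \<or> i = 3 \<or> i = 4 \<or> i = 5 \<or> i = 6 \<or> i = 7"
  by auto

lemma ball7: "(\<forall>m\<in>{1..7::nat}. P m) \<longleftrightarrow> P 1 \<and> P 2 \<and> P 3 \<and> P 4 \<and> P 5 \<and> P 6 \<and> P 7"
  unfolding Ball_def in7 by blast

lemma roots_ga:
  assumes "a \<noteq> 0" "a \<noteq> 1"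
  shows "roots 7 (ga a) = {(1,2,4),(1,3,5),(2,3,6),(1,6,7),(2,5,7),(3,4,7)}"
  using assms by (auto simp: roots_def ga_def dcoef_def split: if_splits)

definition N0 :: "nat \<Rightarrow> real" where
  "N0 m = (if m \<le> 3 then 1/2 else if m \<le> 6 then 1 else 3/2)"

lemma is_nik_N0:
  assumes "a \<noteq> 0" "a \<noteq> 1"
  shows "is_nik 7 (ga a) N0"
  unfolding is_nik_def roots_ga[OF assms]
  apply (rule exI[of _ "\<lambda>r. if r = (2,3,6) \<or> r = (1,6,7) then 1/2 else 0"])
  apply (simp only: ball7 sum7)
  apply (simp add: rootrow_def N0_def)
  done

lemma nik_uniq:
  assumes "a \<noteq> 0" "a \<noteq> 1" and "is_nik 7 (ga a) N" and "m \<in> {1..7}"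
  shows "N m = N0 m"
proof -
  obtain b where hb: "\<forall>r\<in>roots 7 (ga a). (\<Sum>m=1..7. rootrow r m * (\<Sum>r'\<in>roots 7 (ga a). rootrow r' m * b r')) = 1"
    and hN: "\<forall>m\<in>{1..7}. N m = (\<Sum>r\<in>roots 7 (ga a). rootrow r m * b r) + 1"
    using assms(3) unfolding is_nik_def by blast
  note hb' = hb[unfolded roots_ga[OF assms(1,2)], simplified sum7 rootrow_def, simplified]
  note hN' = hN[unfolded roots_ga[OF assms(1,2)] ball7, simplified rootrow_def, simplified]
  show ?thesis using assms(4) hb' hN' unfolding in7 N0_def
    by (elim disjE) (simp; linarith)+
qed

lemma nik_val:
  assumes "a \<noteq> 0" "a \<noteq> 1" and "m \<in> {1..7}"
  shows "nik 7 (ga a) m = N0 m"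
proof -
  have "is_nik 7 (ga a) (nik 7 (ga a))"
    unfolding nik_def by (rule someI[of _ N0], rule is_nik_N0[OF assms(1,2)])
  thus ?thesis using nik_uniq assms by blast
qed



definition Rd :: "real \<Rightarrow> (nat \<Rightarrow> real) \<Rightarrow> nat \<Rightarrow> real" where
  "Rd a g m = (let y124 = (a-1)^2 * g 4 / (g 1 * g 2); y135 = a^2 * g 5 / (g 1 * g 3);
     y236 = g 6 / (g 2 * g 3); y167 = g 7 / (g 1 * g 6); y257 = g 7 / (g 2 * g 5);
     y347 = g 7 / (g 3 * g 4) in
     (if m = 1 then -(y124+y135+y167)/2 else if m = 2 then -(y124+y236+y257)/2
      else if m = 3 then -(y135+y236+y347)/2 else if m = 4 then (y124 - y347)/2
      else if m = 5 then (y135 - y257)/2 else if m = 6 then (y236 - y167)/2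
      else (y167+y257+y347)/2))"

definition solset :: "real \<Rightarrow> (real \<times> real \<times> real) set" where
  "solset a = {((a-1)/(4*a), 1/4, 1/(4*a)), ((1-a)/4, a/4, 1/4), (1/4, -a/(4*(1-a)), 1/(4*(1-a)))}"

lemma fwd:
  assumes a: "a \<noteq> 0" "a \<noteq> 1"
    and nz: "g 1 \<noteq> 0" "g 2 \<noteq> 0" "g 3 \<noteq> 0" "g 4 \<noteq> 0" "g 5 \<noteq> 0" "g 6 \<noteq> 0" "g 7 \<noteq> 0"
    and E: "\<forall>m\<in>{1..7}. Rd a g m = -1/2 + 1/2 * N0 m"
  shows "\<exists>p q t. (p,q,t) \<in> solset a \<and> g 4 = p * g 1 * g 2 / (a-1)^2 \<and> g 5 = q * g 1 * g 3 / a^2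
          \<and> g 6 = t * g 2 * g 3 \<and> g 7 = t^2 * g 1 * g 2 * g 3"
proof -
  define y1 where "y1 = (a-1)^2 * g 4 / (g 1 * g 2)"
  define y2 where "y2 = a^2 * g 5 / (g 1 * g 3)"
  define y3 where "y3 = g 6 / (g 2 * g 3)"
  define y4 where "y4 = g 7 / (g 1 * g 6)"
  define y5 where "y5 = g 7 / (g 2 * g 5)"
  define y6 where "y6 = g 7 / (g 3 * g 4)"
  have R: "Rd a g m = (if m = 1 then -(y1+y2+y4)/2 else if m = 2 then -(y1+y3+y5)/2
      else if m = 3 then -(y2+y3+y6)/2 else if m = 4 then (y1 - y6)/2
      else if m = 5 then (y2 - y5)/2 else if m = 6 then (y3 - y4)/2
      else (y4+y5+y6)/2)" for m
    unfolding Rd_def Let_def y1_def y2_def y3_def y4_def y5_def y6_def by simp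
  have e: "-(y1+y2+y4)/2 = -1/4" "(y1 - y6)/2 = 0" "(y2 - y5)/2 = 0" "(y3 - y4)/2 = 0"
    using E unfolding ball7 R N0_def by simp_all
  have a1: "(a-1) \<noteq> 0" using a by simp
  have h4: "g 4 = y1 * g 1 * g 2 / (a-1)^2" using nz a1 unfolding y1_def by (simp add: field_simps)
  have h5: "g 5 = y2 * g 1 * g 3 / a^2" using nz a unfolding y2_def by (simp add: field_simps)
  have h6: "g 6 = y3 * g 2 * g 3" using nz unfolding y3_def by (simp add: field_simps)
  have h7: "g 7 = y3^2 * g 1 * g 2 * g 3"
  proof -
    have "g 7 = y4 * g 1 * g 6" using nz unfolding y4_def by (simp add: field_simps)
    also have "y4 = y3" using e by simp
    finally show ?thesis using h6 by (simp add: power2_eq_square)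
  qed
  have G: "g 1 * g 2 * g 3 \<noteq> 0" using nz by simp
  have q2: "y2^2 = a^2 * y3^2"
  proof -
    have "g 7 = y5 * g 2 * g 5" using nz unfolding y5_def by (simp add: field_simps)
    also have "y5 = y2" using e by simp
    finally have "y3^2 * (g 1 * g 2 * g 3) = y2^2 / a^2 * (g 1 * g 2 * g 3)"
      using h5 h7 by (simp add: power2_eq_square field_simps)
    hence "y3^2 = y2^2 / a^2" by (metis G mult_right_cancel)
    thus ?thesis using a by (simp add: field_simps)
  qed
  have p2: "y1^2 = (a-1)^2 * y3^2"
  proof -
    have "g 7 = y6 * g 3 * g 4" using nz unfolding y6_def by (simp add: field_simps)
    also have "y6 = y1" using e by simp
    finally have "y3^2 * (g 1 * g 2 * g 3) = y1^2 / (a-1)^2 * (g 1 * g 2 * g 3)"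
      using h4 h7 by (simp add: power2_eq_square field_simps)
    hence "y3^2 = y1^2 / (a-1)^2" by (metis G mult_right_cancel)
    thus ?thesis using a1 by (simp add: field_simps)
  qed
  have s: "y1 + y2 + y3 = 1/2" using e by simp
  have qc: "y2 = a * y3 \<or> y2 = - (a * y3)"
    using q2 by (metis power_mult_distrib power2_eq_iff)
  have pc: "y1 = (a-1) * y3 \<or> y1 = - ((a-1) * y3)"
    using p2 by (metis power_mult_distrib power2_eq_iff)
  have "(y1,y2,y3) \<in> solset a"
    using qc pc
  proof (elim disjE)
    assume "y2 = a * y3" "y1 = (a-1) * y3"
    with s have "y3 = 1/(4*a)" using a by (simp add: field_simps)
    thus ?thesis using \<open>y2 = a * y3\<close> \<open>y1 = (a-1) * y3\<close> a unfolding solset_def by simp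
  next
    assume h: "y2 = a * y3" "y1 = - ((a-1) * y3)"
    with s have y3: "y3 = 1/4" by (simp add: field_simps)
    have "(y1,y2,y3) = ((1-a)/4, a/4, 1/4)" using h y3 by (simp add: field_simps)
    thus ?thesis unfolding solset_def by simp
  next
    assume "y2 = - (a * y3)" "y1 = (a-1) * y3"
    with s show ?thesis by (simp add: field_simps)
  next
    assume h: "y2 = - (a * y3)" "y1 = - ((a-1) * y3)"
    with s have y3: "y3 = 1/(4*(1-a))" using a1 by (simp add: field_simps)
    have a2: "1 - a \<noteq> 0" using a by simp
    have "y1 = (1-a) * y3" using h(2) by (simp add: algebra_simps)
    also have "\<dots> = (1-a) * (1/(4*(1-a)))" using y3 by simp
    also have "\<dots> = 1/4" using a2 by simp
    finally have "y1 = 1/4" .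
    moreover have "y2 = -a/(4*(1-a))" using h(1) y3 a2 by (simp add: field_simps)
    ultimately have "(y1,y2,y3) = (1/4, -a/(4*(1-a)), 1/(4*(1-a)))" using y3 by simp
    thus ?thesis unfolding solset_def by simp
  qed
  thus ?thesis using h4 h5 h6 h7 by blast
qed



lemma sol_props:
  assumes a: "a \<noteq> 0" "a \<noteq> 1" and sol: "(p,q,t) \<in> solset a"
  shows "p + q + t = 1/2 \<and> q^2 = a^2 * t^2 \<and> p^2 = (a-1)^2 * t^2 \<and> p \<noteq> 0 \<and> q \<noteq> 0 \<and> t \<noteq> 0"
proof -
  have a1: "a - 1 \<noteq> 0" "1 - a \<noteq> 0" using a by auto
  from sol consider "p = (a-1)/(4*a)" "q = 1/4" "t = 1/(4*a)"
    | "p = (1-a)/4" "q = a/4" "t = 1/4"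
    | "p = 1/4" "q = -a/(4*(1-a))" "t = 1/(4*(1-a))"
    unfolding solset_def by auto
  then show ?thesis
  proof cases
    case 1 show ?thesis unfolding 1 using a a1 by (simp add: field_simps power2_eq_square)
  next
    case 2 show ?thesis unfolding 2 using a a1 by (simp add: field_simps power2_eq_square)
  next
    case 3
    have "16 + a*(a*16) - a*32 = 16*((a-1)*(a-1))" by algebra
    moreover have "(a-1)*(a-1) \<noteq> 0" using a1 by simp
    ultimately have a3: "16 + a*(a*16) \<noteq> a*32" by auto
    show ?thesis unfolding 3 using a a1 a3 by (simp add: field_simps power2_eq_square)
  qed
qed

lemma bwd:
  assumes a: "a \<noteq> 0" "a \<noteq> 1" and sol: "(p,q,t) \<in> solset a"
    and nz: "g 1 \<noteq> 0" "g 2 \<noteq> 0" "g 3 \<noteq> 0"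
    and h4: "g 4 = p * g 1 * g 2 / (a-1)^2" and h5: "g 5 = q * g 1 * g 3 / a^2"
    and h6: "g 6 = t * g 2 * g 3" and h7: "g 7 = t^2 * g 1 * g 2 * g 3"
  shows "\<forall>m\<in>{1..7}. Rd a g m = -1/2 + 1/2 * N0 m"
proof -
  have a1: "a - 1 \<noteq> 0" using a by auto
  note sp = sol_props[OF a sol]
  have pnz: "p \<noteq> 0" and qnz: "q \<noteq> 0" and tnz: "t \<noteq> 0" and q2: "q^2 = a^2 * t^2"
    and p2: "p^2 = (a-1)^2 * t^2" and s: "p + q + t = 1/2" using sp by auto
  have y1: "(a-1)^2 * g 4 / (g 1 * g 2) = p" using nz a1 unfolding h4 by (simp add: field_simps)
  have y2: "a^2 * g 5 / (g 1 * g 3) = q" using nz a unfolding h5 by (simp add: field_simps)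
  have y3: "g 6 / (g 2 * g 3) = t" using nz unfolding h6 by (simp add: field_simps)
  have y4: "g 7 / (g 1 * g 6) = t" using nz sp unfolding h6 h7 by (simp add: field_simps power2_eq_square)
  have y5: "g 7 / (g 2 * g 5) = q"
  proof -
    have "g 7 / (g 2 * g 5) = a^2 * t^2 / q" using nz sp a unfolding h5 h7 by (simp add: field_simps power2_eq_square)
    also have "\<dots> = q^2 / q" using q2 by simp
    also have "\<dots> = q" using qnz by (simp add: power2_eq_square)
    finally show ?thesis .
  qed
  have y6: "g 7 / (g 3 * g 4) = p"
  proof -
    have "g 7 / (g 3 * g 4) = (a-1)^2 * t^2 / p" using nz sp a1 unfolding h4 h7 by (simp add: field_simps power2_eq_square)
    also have "\<dots> = p^2 / p" using p2 by simp
    also have "\<dots> = p" using pnz by (simp add: power2_eq_square)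
    finally show ?thesis .
  qed
  show ?thesis unfolding ball7 Rd_def Let_def N0_def y1 y2 y3 y4 y5 y6
    using sp by simp
qed



lemma ric:
  assumes nz: "g 1 \<noteq> 0" "g 2 \<noteq> 0" "g 3 \<noteq> 0" "g 4 \<noteq> 0" "g 5 \<noteq> 0" "g 6 \<noteq> 0" "g 7 \<noteq> 0"
    and l: "l \<in> {1..7}" and j: "j \<in> {1..7}"
  shows "ric_op 7 (ga a) g l j = (if l = j then Rd a g l else 0)"
  using l j unfolding in7 ric_op_def ric_form_def curv_def sum7
  apply (elim disjE)
  apply (simp_all only:)
  apply (simp_all add: lc_def ga_def dcoef_def Rd_def Let_def nz)
  using nz(1) apply (simp_all add: field_simps nz power2_eq_square)
  done

lemma cond_iff:
  assumes a: "a \<noteq> 0" "a \<noteq> 1" and nz: "\<forall>i\<in>{1..7}. g i \<noteq> 0"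
  shows "(\<forall>l\<in>{1..7}. \<forall>j\<in>{1..7}. ric_op 7 (ga a) g l j = (if l = j then - 1/2 + 1/2 * nik 7 (ga a) j else 0))
     \<longleftrightarrow> (\<forall>m\<in>{1..7}. Rd a g m = -1/2 + 1/2 * N0 m)"
proof -
  have nz': "g 1 \<noteq> 0" "g 2 \<noteq> 0" "g 3 \<noteq> 0" "g 4 \<noteq> 0" "g 5 \<noteq> 0" "g 6 \<noteq> 0" "g 7 \<noteq> 0"
    using nz unfolding ball7 by auto
  show ?thesis using ric[OF nz'] nik_val[OF a] by auto
qed

lemma sgn3: "x \<noteq> 0 \<Longrightarrow> y \<noteq> 0 \<Longrightarrow> z \<noteq> 0 \<Longrightarrow> ((x*y*z::real) < 0) = ((x<0) \<noteq> ((y<0) \<noteq> (z<0)))"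
  by (auto simp: mult_less_0_iff zero_less_mult_iff)

lemma sgn3c: "x \<noteq> 0 \<Longrightarrow> y \<noteq> 0 \<Longrightarrow> z \<noteq> 0 \<Longrightarrow> c > 0 \<Longrightarrow> ((x*y*z/c::real) < 0) = ((x<0) \<noteq> ((y<0) \<noteq> (z<0)))"
  using sgn3[of x y z] by (simp add: divide_less_0_iff)

definition sset :: "bool \<Rightarrow> bool \<Rightarrow> bool \<Rightarrow> bool \<Rightarrow> bool \<Rightarrow> bool \<Rightarrow> bool \<Rightarrow> nat set" where
  "sset b1 b2 b3 b4 b5 b6 b7 = (if b1 then insert 1 else id) ((if b2 then insert 2 else id)
     ((if b3 then insert 3 else id) ((if b4 then insert 4 else id) ((if b5 then insert 5 else id)
     ((if b6 then insert 6 else id) ((if b7 then insert 7 else id) {}))))))"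

lemma mem_sset: "i \<in> sset b1 b2 b3 b4 b5 b6 b7 \<longleftrightarrow> (i = 1 \<and> b1) \<or> (i = 2 \<and> b2) \<or> (i = 3 \<and> b3) \<or> (i = 4 \<and> b4) \<or> (i = 5 \<and> b5) \<or> (i = 6 \<and> b6) \<or> (i = 7 \<and> b7)"
  unfolding sset_def by auto

lemma ns_sset: "{i \<in> {1..7::nat}. g i < (0::real)} = sset (g 1 < 0) (g 2 < 0) (g 3 < 0) (g 4 < 0) (g 5 < 0) (g 6 < 0) (g 7 < 0)"
  unfolding set_eq_iff mem_sset mem_Collect_eq in7 by blast

lemma negset_form:
  assumes a: "a \<noteq> 0" "a \<noteq> 1" and sol: "(p,q,t) \<in> solset a"
    and nz: "g 1 \<noteq> 0" "g 2 \<noteq> 0" "g 3 \<noteq> 0"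
    and h4: "g 4 = p * g 1 * g 2 / (a-1)^2" and h5: "g 5 = q * g 1 * g 3 / a^2"
    and h6: "g 6 = t * g 2 * g 3" and h7: "g 7 = t^2 * g 1 * g 2 * g 3"
  shows "{i \<in> {1..7::nat}. g i < 0} = sset (g 1 < 0) (g 2 < 0) (g 3 < 0)
     ((p<0) \<noteq> ((g 1<0) \<noteq> (g 2<0))) ((q<0) \<noteq> ((g 1<0) \<noteq> (g 3<0)))
     ((t<0) \<noteq> ((g 2<0) \<noteq> (g 3<0))) ((g 1<0) \<noteq> ((g 2<0) \<noteq> (g 3<0)))"
proof -
  note sp = sol_props[OF a sol]
  have pnz: "p \<noteq> 0" and qnz: "q \<noteq> 0" and tnz: "t \<noteq> 0" using sp by auto
  have "(g 4 < 0) = ((p<0) \<noteq> ((g 1<0) \<noteq> (g 2<0)))" unfolding h4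
    by (rule sgn3c) (use pnz nz a in auto)
  moreover have "(g 5 < 0) = ((q<0) \<noteq> ((g 1<0) \<noteq> (g 3<0)))" unfolding h5
    by (rule sgn3c) (use qnz nz a in auto)
  moreover have "(g 6 < 0) = ((t<0) \<noteq> ((g 2<0) \<noteq> (g 3<0)))" unfolding h6
    by (rule sgn3) (use tnz nz in auto)
  moreover have "(g 7 < 0) = ((g 1<0) \<noteq> ((g 2<0) \<noteq> (g 3<0)))"
  proof -
    have t2: "t^2 > 0" using tnz by simp
    have "(g 7 < 0) = ((t^2 * g 1 < 0) \<noteq> ((g 2<0) \<noteq> (g 3<0)))" unfolding h7
      by (rule sgn3) (use tnz nz in auto)
    moreover have "(t^2 * g 1 < 0) = (g 1 < 0)" using t2 by (simp add: mult_less_0_iff)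
    ultimately show ?thesis by simp
  qed
  ultimately show ?thesis unfolding ns_sset by simp
qed



definition SS :: "bool \<Rightarrow> bool \<Rightarrow> bool \<Rightarrow> bool \<Rightarrow> bool \<Rightarrow> bool \<Rightarrow> nat set" where
  "SS s1 s2 s3 P Q T = sset s1 s2 s3 (P \<noteq> (s1 \<noteq> s2)) (Q \<noteq> (s1 \<noteq> s3)) (T \<noteq> (s2 \<noteq> s3)) (s1 \<noteq> (s2 \<noteq> s3))"

lemma sigs_char:
  assumes a: "a \<noteq> 0" "a \<noteq> 1"
  shows "sigs 7 (ga a) = {SS s1 s2 s3 P Q T | s1 s2 s3 P Q T.
            \<exists>p q t. (p,q,t) \<in> solset a \<and> P = (p < 0) \<and> Q = (q < 0) \<and> T = (t < 0)}"
proof (rule set_eqI, rule iffI)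
  fix X assume "X \<in> sigs 7 (ga a)"
  then obtain g where X: "X = {i \<in> {1..7}. g i < 0}" and nz: "\<forall>i\<in>{1..7}. g i \<noteq> 0"
    and C: "\<forall>l\<in>{1..7}. \<forall>j\<in>{1..7}. ric_op 7 (ga a) g l j = (if l = j then - 1/2 + 1/2 * nik 7 (ga a) j else 0)"
    unfolding sigs_def by blast
  have nz': "g 1 \<noteq> 0" "g 2 \<noteq> 0" "g 3 \<noteq> 0" "g 4 \<noteq> 0" "g 5 \<noteq> 0" "g 6 \<noteq> 0" "g 7 \<noteq> 0"
    using nz unfolding ball7 by auto
  have E: "\<forall>m\<in>{1..7}. Rd a g m = -1/2 + 1/2 * N0 m" using C cond_iff[OF a nz] by blast
  obtain p q t where sol: "(p,q,t) \<in> solset a" and h4: "g 4 = p * g 1 * g 2 / (a-1)^2"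
    and h5: "g 5 = q * g 1 * g 3 / a^2" and h6: "g 6 = t * g 2 * g 3" and h7: "g 7 = t^2 * g 1 * g 2 * g 3"
    using fwd[OF a nz' E] by blast
  have "X = SS (g 1 < 0) (g 2 < 0) (g 3 < 0) (p < 0) (q < 0) (t < 0)"
    unfolding X SS_def by (rule negset_form[OF a sol nz'(1-3) h4 h5 h6 h7])
  thus "X \<in> {SS s1 s2 s3 P Q T | s1 s2 s3 P Q T.
            \<exists>p q t. (p,q,t) \<in> solset a \<and> P = (p < 0) \<and> Q = (q < 0) \<and> T = (t < 0)}"
    using sol by blast
next
  fix X assume "X \<in> {SS s1 s2 s3 P Q T | s1 s2 s3 P Q T.
            \<exists>p q t. (p,q,t) \<in> solset a \<and> P = (p < 0) \<and> Q = (q < 0) \<and> T = (t < 0)}"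
  then obtain s1 s2 s3 p q t where X: "X = SS s1 s2 s3 (p < 0) (q < 0) (t < 0)" and sol: "(p,q,t) \<in> solset a"
    by blast
  note sp = sol_props[OF a sol]
  have pnz: "p \<noteq> 0" and qnz: "q \<noteq> 0" and tnz: "t \<noteq> 0" using sp by auto
  define s :: "bool \<Rightarrow> real" where "s b = (if b then -1 else 1)" for b
  define g :: "nat \<Rightarrow> real" where "g i = (if i = 1 then s s1 else if i = 2 then s s2 else if i = 3 then s s3
     else if i = 4 then p * s s1 * s s2 / (a-1)^2 else if i = 5 then q * s s1 * s s3 / a^2
     else if i = 6 then t * s s2 * s s3 else t^2 * s s1 * s s2 * s s3)" for i
  have sv: "s b \<noteq> 0" "(s b < 0) = b" for b unfolding s_def by auto
  have g1: "g 1 = s s1" "g 2 = s s2" "g 3 = s s3" unfolding g_def by simp_all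
  have h4: "g 4 = p * g 1 * g 2 / (a-1)^2" and h5: "g 5 = q * g 1 * g 3 / a^2"
    and h6: "g 6 = t * g 2 * g 3" and h7: "g 7 = t^2 * g 1 * g 2 * g 3" unfolding g_def by simp_all
  have nz3: "g 1 \<noteq> 0" "g 2 \<noteq> 0" "g 3 \<noteq> 0" unfolding g1 by (simp_all add: sv)
  have nz: "\<forall>i\<in>{1..7}. g i \<noteq> 0" unfolding ball7 using nz3 pnz qnz tnz a
    unfolding h4 h5 h6 h7 by simp
  have E: "\<forall>m\<in>{1..7}. Rd a g m = -1/2 + 1/2 * N0 m" by (rule bwd[OF a sol nz3 h4 h5 h6 h7])
  have C: "\<forall>l\<in>{1..7}. \<forall>j\<in>{1..7}. ric_op 7 (ga a) g l j = (if l = j then - 1/2 + 1/2 * nik 7 (ga a) j else 0)"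
    using E cond_iff[OF a nz] by blast
  have "X = {i \<in> {1..7}. g i < 0}"
    unfolding X SS_def negset_form[OF a sol nz3 h4 h5 h6 h7] unfolding g1 sv ..
  thus "X \<in> sigs 7 (ga a)" unfolding sigs_def using nz C by blast
qed



lemma setneg:
  "{SS s1 s2 s3 P Q T | s1 s2 s3 P Q T. (P,Q,T) \<in> {(False,False,True),(False,True,False),(False,False,False)}} =
           {{}, {1,2,3,5,7}, {1,2,3,6,7}, {1,2,3,7}, {1,2,6}, {1,2,5}, {1,2,5,6}, {1,3,4},
            {1,3,4,5,6}, {1,3,4,6}, {1,4,5,6,7}, {1,4,5,7}, {1,4,7}, {2,3,4}, {2,3,4,5},
            {2,3,4,5,6}, {2,4,5,6,7}, {2,4,6,7}, {2,4,7}, {3,5,6,7}, {3,5,7}, {3,6,7}, {5}, {6}}"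
  apply (rule set_eqI)
  apply (simp only: mem_Collect_eq insert_iff empty_iff prod.inject ex_bool_eq simp_thms)
  apply (simp add: SS_def sset_def)
  apply argo
  done

lemma setmid:
  "{SS s1 s2 s3 P Q T | s1 s2 s3 P Q T. (P,Q,T) \<in> {(True,False,False),(False,False,False),(False,True,False)}} =
           {{}, {1,2,3,4,7}, {1,2,3,7}, {1,2,3,5,7}, {1,2,4,5,6}, {1,2,5,6}, {1,2,6},
            {1,3,4,5,6}, {1,3,4,6}, {1,3,6}, {1,4,5,7}, {1,4,7}, {1,5,7}, {2,3,4}, {2,3,4,5},
            {2,3,5}, {2,4,5,6,7}, {2,4,6,7}, {2,6,7}, {3,4,5,6,7}, {3,5,6,7}, {3,6,7}, {4}, {5}}"
  apply (rule set_eqI)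
  apply (simp only: mem_Collect_eq insert_iff empty_iff prod.inject ex_bool_eq simp_thms)
  apply (simp add: SS_def sset_def)
  apply argo
  done

lemma setbig:
  "{SS s1 s2 s3 P Q T | s1 s2 s3 P Q T. (P,Q,T) \<in> {(False,False,False),(True,False,False),(False,False,True)}} =
           {{}, {1,2,3,4,7}, {1,2,3,6,7}, {1,2,3,7}, {1,2,4,5,6}, {1,2,5}, {1,2,5,6}, {1,3,4},
            {1,3,4,6}, {1,3,6}, {1,4,5,6,7}, {1,4,5,7}, {1,5,7}, {2,3,4,5}, {2,3,4,5,6},
            {2,3,5}, {2,4,6,7}, {2,4,7}, {2,6,7}, {3,4,5,6,7}, {3,5,6,7}, {3,5,7}, {4}, {6}}"
  apply (rule set_eqI)
  apply (simp only: mem_Collect_eq insert_iff empty_iff prod.inject ex_bool_eq simp_thms)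
  apply (simp add: SS_def sset_def)
  apply argo
  done

theorem lemma2p6:
  fixes a :: real
  assumes "a \<noteq> 0" and "a \<noteq> 1"
  shows "(a < 0 \<longrightarrow> sigs 7 (ga a) =
           {{}, {1,2,3,5,7}, {1,2,3,6,7}, {1,2,3,7}, {1,2,6}, {1,2,5}, {1,2,5,6}, {1,3,4},
            {1,3,4,5,6}, {1,3,4,6}, {1,4,5,6,7}, {1,4,5,7}, {1,4,7}, {2,3,4}, {2,3,4,5},
            {2,3,4,5,6}, {2,4,5,6,7}, {2,4,6,7}, {2,4,7}, {3,5,6,7}, {3,5,7}, {3,6,7}, {5}, {6}})
       \<and> (0 < a \<and> a < 1 \<longrightarrow> sigs 7 (ga a) =
           {{}, {1,2,3,4,7}, {1,2,3,7}, {1,2,3,5,7}, {1,2,4,5,6}, {1,2,5,6}, {1,2,6},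
            {1,3,4,5,6}, {1,3,4,6}, {1,3,6}, {1,4,5,7}, {1,4,7}, {1,5,7}, {2,3,4}, {2,3,4,5},
            {2,3,5}, {2,4,5,6,7}, {2,4,6,7}, {2,6,7}, {3,4,5,6,7}, {3,5,6,7}, {3,6,7}, {4}, {5}})
       \<and> (1 < a \<longrightarrow> sigs 7 (ga a) =
           {{}, {1,2,3,4,7}, {1,2,3,6,7}, {1,2,3,7}, {1,2,4,5,6}, {1,2,5}, {1,2,5,6}, {1,3,4},
            {1,3,4,6}, {1,3,6}, {1,4,5,6,7}, {1,4,5,7}, {1,5,7}, {2,3,4,5}, {2,3,4,5,6},
            {2,3,5}, {2,4,6,7}, {2,4,7}, {2,6,7}, {3,4,5,6,7}, {3,5,6,7}, {3,5,7}, {4}, {6}})"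
proof -
  note sc = sigs_char[OF assms]
  have A: "(\<exists>p q t. (p,q,t) \<in> solset a \<and> P = (p < 0) \<and> Q = (q < 0) \<and> T = (t < 0)) \<longleftrightarrow>
     P = ((a-1)/(4*a) < 0) \<and> Q = (1/4 < (0::real)) \<and> T = (1/(4*a) < 0) \<or>
     P = ((1-a)/4 < 0) \<and> Q = (a/4 < 0) \<and> T = (1/4 < (0::real)) \<or>
     P = (1/4 < (0::real)) \<and> Q = (-a/(4*(1-a)) < 0) \<and> T = (1/(4*(1-a)) < 0)" for P Q T
    unfolding solset_def by blast
  have r1: "a < 0 \<Longrightarrow> sigs 7 (ga a) = {SS s1 s2 s3 P Q T | s1 s2 s3 P Q T. (P,Q,T) \<in> {(False,False,True),(False,True,False),(False,False,False)}}"
  proof -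
    assume h: "a < 0"
    have f0: "((a-1)/(4*a) < 0) = False" using h by (simp add: divide_less_0_iff zero_less_divide_iff)
    have f1: "(1/(4*a) < 0) = True" using h by (simp add: divide_less_0_iff zero_less_divide_iff)
    have f2: "((1-a)/4 < 0) = False" using h by (simp add: divide_less_0_iff zero_less_divide_iff)
    have f3: "(a/4 < 0) = True" using h by (simp add: divide_less_0_iff zero_less_divide_iff)
    have f4: "(-a/(4*(1-a)) < 0) = False" using h by (simp add: divide_less_0_iff zero_less_divide_iff)
    have f5: "(1/(4*(1-a)) < 0) = False" using h by (simp add: divide_less_0_iff zero_less_divide_iff)
    show ?thesis unfolding sc A f0 f1 f2 f3 f4 f5 by simp
  qed
  have r2: "0 < a \<and> a < 1 \<Longrightarrow> sigs 7 (ga a) = {SS s1 s2 s3 P Q T | s1 s2 s3 P Q T. (P,Q,T) \<in> {(True,False,False),(False,False,False),(False,True,False)}}"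
  proof -
    assume h: "0 < a \<and> a < 1"
    have f0: "((a-1)/(4*a) < 0) = True" using h by (simp add: divide_less_0_iff zero_less_divide_iff)
    have f1: "(1/(4*a) < 0) = False" using h by (simp add: divide_less_0_iff zero_less_divide_iff)
    have f2: "((1-a)/4 < 0) = False" using h by (simp add: divide_less_0_iff zero_less_divide_iff)
    have f3: "(a/4 < 0) = False" using h by (simp add: divide_less_0_iff zero_less_divide_iff)
    have f4: "(-a/(4*(1-a)) < 0) = True" using h by (simp add: divide_less_0_iff zero_less_divide_iff)
    have f5: "(1/(4*(1-a)) < 0) = False" using h by (simp add: divide_less_0_iff zero_less_divide_iff)
    show ?thesis unfolding sc A f0 f1 f2 f3 f4 f5 by simp
  qed
  have r3: "1 < a \<Longrightarrow> sigs 7 (ga a) = {SS s1 s2 s3 P Q T | s1 s2 s3 P Q T. (P,Q,T) \<in> {(False,False,False),(True,False,False),(False,False,True)}}"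
  proof -
    assume h: "1 < a"
    have f0: "((a-1)/(4*a) < 0) = False" using h by (simp add: divide_less_0_iff zero_less_divide_iff)
    have f1: "(1/(4*a) < 0) = False" using h by (simp add: divide_less_0_iff zero_less_divide_iff)
    have f2: "((1-a)/4 < 0) = True" using h by (simp add: divide_less_0_iff zero_less_divide_iff)
    have f3: "(a/4 < 0) = False" using h by (simp add: divide_less_0_iff zero_less_divide_iff)
    have f4: "(-a/(4*(1-a)) < 0) = False" using h by (simp add: divide_less_0_iff zero_less_divide_iff)
    have f5: "(1/(4*(1-a)) < 0) = True" using h by (simp add: divide_less_0_iff zero_less_divide_iff)
    show ?thesis unfolding sc A f0 f1 f2 f3 f4 f5 by simp
  qed
  show ?thesis using r1 r2 r3 setneg setmid setbig by simp
qed


end
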